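(* Let $a,b\in(0,1]$ with $a+b\leq1$. Define on $[0,1)$ $$h(x)=\frac{(ab)^2}{(a+b)(a+b+1)}(1-x)\,{}_2F_1(a+1,b+1;a+b+2;x)+\frac{ab}{a+b}\,{}_2F_1(a,b;a+b+1;x),$$ $$g(x)=-\Big(\frac{2ab}{a+b}\,{}_2F_1(a,b;a+b+1;x)+{}_2F_1(a,b;a+b;x)\Big),\qquad \Delta(x)=g(x)^2-8h(x)\,{}_2F_1(a,b;a+b;x),$$ $$\varphi_\pm(x)=\log(1-x)+\frac{-g(x)\pm\sqrt{\Delta(x)}}{2h(x)},$$ and $\alpha_0=\max_{[0,1)}\varphi_+$, $\delta_-=\max_{[0,1)}\varphi_-$, $\delta_+=\min_{[0,1)}\varphi_+$. If $c\in[\delta_-,\delta_+]$, then for all $x\in(0,1)$ $$\frac1c+\frac1{B(a,b)}\leq\frac{{}_2F_1(a,b;a+b;x)}{c-\log(1-x)}+\frac{{}_2F_1(a,b;a+b;1-x)}{c-\log x}\leq\frac{2\,{}_2F_1(a,b;a+b;1/2)}{c+\log2}.$$ If $c\geq\alpha_0$, then the reversed inequalities hold.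
   Context: ${}_2F_1$ is the Gauss hypergeometric function; $B(a,b)=\Gamma(a)\Gamma(b)/\Gamma(a+b)$. *)

theory Defs
  imports "HOL-Analysis.Analysis"
begin

definition hyp2F1 :: "real \<Rightarrow> real \<Rightarrow> real \<Rightarrow> real \<Rightarrow> real" where
  "hyp2F1 a b c x =
     (\<Sum>n. pochhammer a n * pochhammer b n / (pochhammer c n * fact n) * x ^ n)"

definition hfun :: "real \<Rightarrow> real \<Rightarrow> real \<Rightarrow> real" where
  "hfun a b x = (a*b)^2 / ((a+b)*(a+b+1)) * (1-x) * hyp2F1 (a+1) (b+1) (a+b+2) x
               + a*b/(a+b) * hyp2F1 a b (a+b+1) x"

definition gfun :: "real \<Rightarrow> real \<Rightarrow> real \<Rightarrow> real" where
  "gfun a b x = - (2*a*b/(a+b) * hyp2F1 a b (a+b+1) x + hyp2F1 a b (a+b) x)"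

definition Deltafun :: "real \<Rightarrow> real \<Rightarrow> real \<Rightarrow> real" where
  "Deltafun a b x = (gfun a b x)^2 - 8 * hfun a b x * hyp2F1 a b (a+b) x"

definition phi_plus :: "real \<Rightarrow> real \<Rightarrow> real \<Rightarrow> real" where
  "phi_plus a b x = ln (1-x) + (- gfun a b x + sqrt (Deltafun a b x)) / (2 * hfun a b x)"

definition phi_minus :: "real \<Rightarrow> real \<Rightarrow> real \<Rightarrow> real" where
  "phi_minus a b x = ln (1-x) + (- gfun a b x - sqrt (Deltafun a b x)) / (2 * hfun a b x)"

text \<open>The paper's maxima/minimum over [0,1) (which it asserts are attained),
  rendered as supremum/infimum.\<close>
definition alpha0 :: "real \<Rightarrow> real \<Rightarrow> real" where
  "alpha0 a b = (SUP x\<in>{0..<1}. phi_plus a b x)"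

definition delta_minus :: "real \<Rightarrow> real \<Rightarrow> real" where
  "delta_minus a b = (SUP x\<in>{0..<1}. phi_minus a b x)"

definition delta_plus :: "real \<Rightarrow> real \<Rightarrow> real" where
  "delta_plus a b = (INF x\<in>{0..<1}. phi_plus a b x)"

end

theory Submission
  imports Defs
begin


definition cf :: "real \<Rightarrow> real \<Rightarrow> real \<Rightarrow> nat \<Rightarrow> real" where
  "cf a b c n = pochhammer a n * pochhammer b n / (pochhammer c n * fact n)"

lemma hyp2F1_cf: "hyp2F1 a b c x = (\<Sum>n. cf a b c n * x ^ n)"
  unfolding hyp2F1_def cf_def by simp

lemma cf_0 [simp]: "cf a b c 0 = 1"
  by (simp add: cf_def)

lemma cf_Suc:
  fixes a b c :: real
  assumes "c > 0"
  shows "cf a b c (Suc n) = cf a b c n * ((a+n)*(b+n)/((c+n)*(n+1)))"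
proof -
  have "pochhammer c n > 0" using assms pochhammer_pos by blast
  moreover have "c + n > 0" using assms by simp
  ultimately show ?thesis
    unfolding cf_def pochhammer_Suc fact_Suc
    by (simp add: field_simps)
qed

lemma cf_pos:
  fixes a b c :: real
  assumes "a > 0" "b > 0" "c > 0"
  shows "cf a b c n > 0"
  using assms unfolding cf_def by (simp add: pochhammer_pos)

lemma cf_le1:
  fixes a b c :: real
  assumes "a > 0" "b > 0" "c > 0" "\<And>n::nat. (a+n)*(b+n) \<le> (c+n)*(n+1)"
  shows "cf a b c n \<le> 1"
proof (induction n)
  case 0 then show ?case by simp
next
  case (Suc n)
  have r: "(a+n)*(b+n)/((c+n)*(n+1)) \<le> 1" "(a+n)*(b+n)/((c+n)*(n+1)) \<ge> 0"
    using assms(4)[of n] assms(1-3) by (auto simp: divide_le_eq_1 add.commute)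
  have "cf a b c (Suc n) = cf a b c n * ((a+n)*(b+n)/((c+n)*(n+1)))"
    using cf_Suc assms by blast
  also have "\<dots> \<le> 1 * 1"
    using Suc r cf_pos[OF assms(1-3), of n] by (intro mult_mono) auto
  finally show ?case by simp
qed

lemma cf_summable:
  fixes a b c x :: real
  assumes "a > 0" "b > 0" "c > 0" "\<And>n::nat. (a+n)*(b+n) \<le> (c+n)*(n+1)"
    and "\<bar>x\<bar> < 1"
  shows "summable (\<lambda>n. cf a b c n * x ^ n)"
proof (rule summable_comparison_test[where g = "\<lambda>n. \<bar>x\<bar> ^ n"])
  show "\<exists>N. \<forall>n\<ge>N. norm (cf a b c n * x ^ n) \<le> \<bar>x\<bar> ^ n"
  proof (intro exI allI impI)
    fix n
    have "norm (cf a b c n * x ^ n) = cf a b c n * \<bar>x\<bar> ^ n"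
      using cf_pos[OF assms(1-3), of n] by (simp add: abs_mult power_abs)
    also have "\<dots> \<le> 1 * \<bar>x\<bar> ^ n"
      using cf_le1[OF assms(1-4), of n] by (intro mult_right_mono) auto
    finally show "norm (cf a b c n * x ^ n) \<le> \<bar>x\<bar> ^ n" by simp
  qed
  show "summable (\<lambda>n. \<bar>x\<bar> ^ n)" using assms(5) by simp
qed




lemma mult_1mx:
  fixes c :: "nat \<Rightarrow> real" and x :: real
  assumes "summable (\<lambda>n. c n * x ^ n)"
  shows "(1 - x) * (\<Sum>n. c n * x ^ n) = (\<Sum>n. (c n - (if n = 0 then 0 else c (n - 1))) * x ^ n)"
proof -
  define S where "S = (\<Sum>n. c n * x ^ n)"
  have s1: "(\<lambda>n. c n * x ^ n) sums S" using assms S_def by (simp add: summable_sums)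
  have "(\<lambda>n. c n * x ^ n * x) sums (S * x)" by (rule sums_mult2[OF s1])
  then have "(\<lambda>n. (\<lambda>m. (if m = 0 then 0 else c (m - 1)) * x ^ m) (Suc n)) sums (S * x)"
    by (simp add: mult.assoc mult.commute[of x])
  then have s2: "(\<lambda>m. (if m = 0 then 0 else c (m - 1)) * x ^ m) sums (S * x)"
    by (subst (asm) sums_Suc_iff) simp
  have "(\<lambda>n. c n * x ^ n - (if n = 0 then 0 else c (n - 1)) * x ^ n) sums (S - S * x)"
    by (rule sums_diff[OF s1 s2])
  then have "(\<lambda>n. (c n - (if n = 0 then 0 else c (n - 1))) * x ^ n) sums ((1 - x) * S)"
    by (simp add: algebra_simps)
  then show ?thesis unfolding S_def by (simp add: sums_iff)
qed

lemma poch_shift: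
  fixes s :: real
  shows "pochhammer (s + 1) n * s = pochhammer s n * (s + n)"
  using pochhammer_rec[of s n] pochhammer_Suc[of s n] by (simp add: mult.commute)

locale hyp =
  fixes a b :: real
  assumes a0: "0 < a" and a1: "a \<le> 1" and b0: "0 < b" and b1: "b \<le> 1" and ab1: "a + b \<le> 1"
begin

abbreviation "s \<equiv> a + b"
definition "k = a * b / (a + b)"
definition "A = cf a b (a + b)"
definition "C = cf a b (a + b + 1)"
definition "E = cf (a + 1) (b + 1) (a + b + 2)"
definition "F x = (\<Sum>n. A n * x ^ n)"
definition "F1 x = (\<Sum>n. diffs A n * x ^ n)"
definition "F2 x = (\<Sum>n. diffs (diffs A) n * x ^ n)"
definition "G x = (\<Sum>n. C n * x ^ n)"
definition "G1 x = (\<Sum>n. diffs C n * x ^ n)"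
definition "H x = (\<Sum>n. E n * x ^ n)"

lemma s0: "s > 0" using a0 b0 by simp
lemma k0: "k > 0" unfolding k_def using a0 b0 by simp
lemma ab_le1: "a * b \<le> a" "a * b \<le> b"
  using mult_left_mono[OF b1, of a] mult_right_mono[OF a1, of b] a0 b0 by auto
lemma ab_le: "a * b \<le> a" "a * b \<le> b" "a * b \<le> s"
  using ab_le1 b0 by auto

lemma condA: "(a + real n) * (b + real n) \<le> (s + real n) * (real n + 1)"
  using ab_le by (simp add: algebra_simps)
lemma condC: "(a + real n) * (b + real n) \<le> (s + 1 + real n) * (real n + 1)"
  using ab_le by (simp add: algebra_simps)
lemma condE: "(a + 1 + real n) * (b + 1 + real n) \<le> (s + 2 + real n) * (real n + 1)"
  using ab_le a1 b1 by (simp add: algebra_simps)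

lemma sumA: "\<bar>x\<bar> < 1 \<Longrightarrow> summable (\<lambda>n. A n * x ^ n)"
  unfolding A_def using cf_summable[of a b s, OF a0 b0 s0 condA] by simp
lemma sumC: "\<bar>x\<bar> < 1 \<Longrightarrow> summable (\<lambda>n. C n * x ^ n)"
  unfolding C_def using cf_summable[of a b "s+1", OF a0 b0 _ condC] s0 by simp
lemma sumE: "\<bar>x\<bar> < 1 \<Longrightarrow> summable (\<lambda>n. E n * x ^ n)"
  unfolding E_def using cf_summable[of "a+1" "b+1" "s+2", OF _ _ _ condE] a0 b0 by simp

lemma sumA1: "\<bar>x\<bar> < 1 \<Longrightarrow> summable (\<lambda>n. diffs A n * x ^ n)"
  by (rule termdiff_converges[where K=1]) (auto intro: sumA)
lemma sumA2: "\<bar>x\<bar> < 1 \<Longrightarrow> summable (\<lambda>n. diffs (diffs A) n * x ^ n)"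
  by (rule termdiff_converges[where K=1]) (auto intro: sumA1)
lemma sumC1: "\<bar>x\<bar> < 1 \<Longrightarrow> summable (\<lambda>n. diffs C n * x ^ n)"
  by (rule termdiff_converges[where K=1]) (auto intro: sumC)

lemma dF: "\<bar>x\<bar> < 1 \<Longrightarrow> (F has_field_derivative F1 x) (at x)"
  unfolding F_def[abs_def] F1_def by (rule termdiffs_strong'[where K=1]) (auto intro: sumA)
lemma dF1: "\<bar>x\<bar> < 1 \<Longrightarrow> (F1 has_field_derivative F2 x) (at x)"
  unfolding F1_def[abs_def] F2_def by (rule termdiffs_strong'[where K=1]) (auto intro: sumA1)
lemma dG: "\<bar>x\<bar> < 1 \<Longrightarrow> (G has_field_derivative G1 x) (at x)"
  unfolding G_def[abs_def] G1_def by (rule termdiffs_strong'[where K=1]) (auto intro: sumC)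

lemma A_Suc: "A (Suc n) = A n * ((a+n)*(b+n)/((s+n)*(n+1)))"
  unfolding A_def by (rule cf_Suc[OF s0])

lemma C_A: "C n = A n * (s / (s + n))"
proof -
  have p: "pochhammer s n > 0" "s + n > 0" using s0 pochhammer_pos by auto
  have e: "pochhammer (s+1) n = pochhammer s n * (s + n) / s"
    using poch_shift[of s n] s0 by (simp add: field_simps)
  show ?thesis unfolding C_def A_def cf_def e
    using p s0 by (simp add: field_simps)
qed

lemma coef1: "diffs A n - (if n = 0 then 0 else diffs A (n - 1)) = k * C n"
proof -
  have "diffs A n - (if n = 0 then 0 else diffs A (n - 1)) = (n+1) * A (Suc n) - n * A n"
    by (cases n) (auto simp: diffs_def)
  also have "\<dots> = A n * ((a+n)*(b+n)/(s+n) - n)"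
  proof -
    have "real (n+1) * A (Suc n) = A n * ((a+n)*(b+n)/(s+n))"
      unfolding A_Suc divide_divide_eq_left[symmetric] by simp
    then show ?thesis by (simp add: algebra_simps)
  qed
  also have "\<dots> = A n * (a*b/(s+n))"
    using s0 by (simp add: field_simps)
  also have "\<dots> = k * C n"
  proof -
    have "s + real n \<noteq> 0" "s \<noteq> 0" using s0 by auto
    have gen: "\<And>S m X p :: real. S \<noteq> 0 \<Longrightarrow> S + m \<noteq> 0 \<Longrightarrow> X * (p/(S+m)) = (p/S) * (X * (S/(S+m)))"
      by (simp add: field_simps)
    show ?thesis unfolding C_A k_def by (rule gen) fact+
  qed
  finally show ?thesis .
qed

lemma coef2: "diffs C n = a * b / (s + 1) * E n"
proof -
  have p: "pochhammer (s+2) n > 0" "pochhammer (s+1+1) n > 0"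
    by (intro pochhammer_pos; use s0 in simp)+
  have e: "s + 1 + 1 = s + 2" by simp
  have q: "real n + 1 \<noteq> 0" "s + 1 \<noteq> 0" "fact n \<noteq> (0::real)" using s0 by auto
  have "diffs C n = real (Suc n) * (a * pochhammer (a+1) n * (b * pochhammer (b+1) n) /
     ((s+1) * pochhammer (s+2) n * (real (Suc n) * fact n)))"
    unfolding diffs_def C_def cf_def pochhammer_rec fact_Suc e by (simp add: add.assoc)
  also have "\<dots> = a * b / (s + 1) * E n"
  proof -
    have gen: "\<And>N P Q R T F :: real. N \<noteq> 0 \<Longrightarrow> T \<noteq> 0 \<Longrightarrow> R \<noteq> 0 \<Longrightarrow> F \<noteq> 0 \<Longrightarrow>
       N * (a * P * (b * Q) / (T * R * (N * F))) = a * b / T * (P * Q / (R * F))"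
      by (simp add: field_simps)
    show ?thesis unfolding E_def cf_def by (rule gen) (use p q in auto)
  qed
  finally show ?thesis .
qed

lemma I1: "\<bar>x\<bar> < 1 \<Longrightarrow> (1 - x) * F1 x = k * G x"
  unfolding F1_def G_def
  by (subst mult_1mx[OF sumA1], assumption) (simp add: coef1 suminf_mult[OF sumC] mult.assoc)

end



context hyp begin

lemma G1_H: "\<bar>x\<bar> < 1 \<Longrightarrow> G1 x = a * b / (s + 1) * H x"
  unfolding G1_def H_def coef2 using suminf_mult[OF sumE, of x "a*b/(s+1)"]
  by (simp add: mult.assoc)

lemma I2a: assumes "\<bar>x\<bar> < 1" shows "(1 - x) * F2 x = k * G1 x + F1 x"
proof -
  have d1: "((\<lambda>y. (1 - y) * F1 y) has_field_derivative (- F1 x + (1 - x) * F2 x)) (at x)"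
    using dF1[OF assms] by (auto intro!: derivative_eq_intros)
  have d2: "((\<lambda>y. k * G y) has_field_derivative k * G1 x) (at x)"
    using dG[OF assms] by (auto intro!: derivative_eq_intros)
  have d3: "((\<lambda>y. (1 - y) * F1 y) has_field_derivative k * G1 x) (at x)"
    by (rule has_field_derivative_transform_within_open[OF d2, of "{-1<..<1}"])
       (use assms I1 in \<open>auto simp: abs_less_iff\<close>)
  from DERIV_unique[OF d1 d3] show ?thesis by simp
qed

lemma hfun_eq: "hfun a b x = (a*b)^2 / (s*(s+1)) * (1-x) * H x + k * G x"
  unfolding hfun_def hyp2F1_cf H_def G_def E_def C_def k_def by simp

lemma gfun_eq: "gfun a b x = - (2 * k * G x + F x)"
  unfolding gfun_def hyp2F1_cf F_def G_def A_def C_def k_def by simp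

lemma F_eq: "hyp2F1 a b (a+b) x = F x"
  unfolding hyp2F1_cf F_def A_def by simp

lemma hfun_F2: assumes "\<bar>x\<bar> < 1" shows "hfun a b x = (1 - x)^2 * F2 x"
proof -
  have "(1 - x)^2 * F2 x = (1 - x) * (k * G1 x + F1 x)"
    using I2a[OF assms] by (simp add: power2_eq_square mult.assoc)
  also have "\<dots> = (1 - x) * k * G1 x + k * G x"
    using I1[OF assms] by (simp add: algebra_simps)
  also have "\<dots> = hfun a b x"
    unfolding hfun_eq G1_H[OF assms] k_def using s0
    by (simp add: power2_eq_square field_simps)
  finally show ?thesis by simp
qed

lemma gfun_F1: assumes "\<bar>x\<bar> < 1" shows "gfun a b x = - (2 * (1 - x) * F1 x + F x)"
proof -
  have "2 * (1 - x) * F1 x = 2 * (k * G x)" using I1[OF assms] by (simp only: mult.assoc)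
  then show ?thesis unfolding gfun_eq by (simp add: mult.assoc)
qed

lemma cA_pos: "A n > 0" unfolding A_def by (rule cf_pos[OF a0 b0 s0])
lemma cC_pos: "C n > 0" unfolding C_def by (rule cf_pos) (use a0 b0 in auto)
lemma cE_pos: "E n > 0" unfolding E_def by (rule cf_pos) (use a0 b0 in auto)

lemma ser_ge1:
  fixes c :: "nat \<Rightarrow> real"
  assumes "summable (\<lambda>n. c n * x ^ n)" "\<And>n. c n \<ge> 0" "c 0 = 1" "x \<ge> 0"
  shows "(\<Sum>n. c n * x ^ n) \<ge> 1"
proof -
  have "(\<Sum>n\<in>{0}. c n * x ^ n) \<le> (\<Sum>n. c n * x ^ n)"
    by (rule sum_le_suminf[OF assms(1)]) (use assms in auto)
  then show ?thesis using assms by simp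
qed

lemma F_ge1: "0 \<le> x \<Longrightarrow> x < 1 \<Longrightarrow> F x \<ge> 1"
  unfolding F_def by (rule ser_ge1) (use sumA cA_pos less_imp_le in \<open>auto simp: A_def\<close>)
lemma G_ge1: "0 \<le> x \<Longrightarrow> x < 1 \<Longrightarrow> G x \<ge> 1"
  unfolding G_def by (rule ser_ge1) (use sumC cC_pos less_imp_le in \<open>auto simp: C_def\<close>)
lemma H_ge1: "0 \<le> x \<Longrightarrow> x < 1 \<Longrightarrow> H x \<ge> 1"
  unfolding H_def by (rule ser_ge1) (use sumE cE_pos less_imp_le in \<open>auto simp: E_def\<close>)

lemma h_ge: "0 \<le> x \<Longrightarrow> x < 1 \<Longrightarrow> hfun a b x \<ge> k * G x"
  unfolding hfun_eq using H_ge1[of x] s0 a0 b0 by (auto intro!: mult_nonneg_nonneg)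

lemma h_pos: "0 \<le> x \<Longrightarrow> x < 1 \<Longrightarrow> hfun a b x \<ge> k"
proof -
  assume x: "0 \<le> x" "x < 1"
  have "k * 1 \<le> k * G x" using G_ge1[OF x] k0 by (intro mult_left_mono) auto
  then show ?thesis using h_ge[OF x] by simp
qed

end



context hyp begin

definition "L = 1 / Beta a b"
definition "q n = real n * A n"

lemma q_Suc_diff: "q (Suc n) - q n = k * C n"
  using coef1[of n] unfolding q_def by (cases n) (auto simp: diffs_def)

lemma kC: "k * C n = a * b * A n / (s + n)"
proof -
  have gen: "\<And>S m X p :: real. S \<noteq> 0 \<Longrightarrow> S + m \<noteq> 0 \<Longrightarrow> (p/S) * (X * (S/(S+m))) = p * X / (S + m)"
    by (simp add: field_simps)
  show ?thesis unfolding k_def C_A by (rule gen) (use s0 in auto)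
qed

lemma q_Gamma: "q (Suc n) = Gamma_series s n / (Gamma_series a n * Gamma_series b n)"
proof -
  have pa: "pochhammer a (n+1) > 0" "pochhammer b (n+1) > 0" "pochhammer s (n+1) > 0"
    by (intro pochhammer_pos; use a0 b0 s0 in simp)+
  have e: "exp (s * ln (real n)) = exp (a * ln (real n)) * exp (b * ln (real n))"
    by (simp add: exp_add[symmetric] algebra_simps)
  have f: "fact (n + 1) = real (n + 1) * fact n" by simp
  have gen: "\<And>N f PA PB PS EA EB :: real. N \<noteq> 0 \<Longrightarrow> f \<noteq> 0 \<Longrightarrow> PA \<noteq> 0 \<Longrightarrow> PB \<noteq> 0 \<Longrightarrow> PS \<noteq> 0
     \<Longrightarrow> EA \<noteq> 0 \<Longrightarrow> EB \<noteq> 0 \<Longrightarrow>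
     N * (PA * PB / (PS * (N * f))) = (f * (EA * EB) / PS) / ((f * EA / PA) * (f * EB / PB))"
    by (simp add: field_simps)
  show ?thesis
    unfolding q_def A_def cf_def Gamma_series_def of_real_eq_id id_apply e Suc_eq_plus1 f
    by (rule gen) (use pa in auto)
qed

lemma q_lim: "q \<longlonglongrightarrow> L"
proof -
  have "(\<lambda>n. Gamma_series s n / (Gamma_series a n * Gamma_series b n)) \<longlonglongrightarrow> Gamma s / (Gamma a * Gamma b)"
    using a0 b0 s0 by (intro tendsto_intros) (auto simp: Gamma_eq_zero_iff elim!: nonpos_Ints_cases')
  then have "(\<lambda>n. q (Suc n)) \<longlonglongrightarrow> L"
    unfolding q_Gamma L_def Beta_def by simp
  then show ?thesis by (rule LIMSEQ_imp_Suc)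
qed

lemma q_inc: "incseq q"
proof (rule incseq_SucI)
  fix n show "q n \<le> q (Suc n)" using q_Suc_diff[of n] k0 cC_pos[of n]
    by (smt (verit) mult_pos_pos)
qed

lemma q_le_L: "q n \<le> L"
  using incseq_le[OF q_inc q_lim] .

lemma L_pos: "L > 0"
proof -
  have "q 1 > 0" unfolding q_def using cA_pos by simp
  then show ?thesis using q_le_L[of 1] by simp
qed

lemma A_le: "n \<ge> 1 \<Longrightarrow> A n \<le> L / n"
  using q_le_L[of n] unfolding q_def by (simp add: field_simps)

lemma q_lower: assumes "n \<ge> 1" shows "L - q n \<le> 2 * a * b * L / n"
proof -
  define r where "r m = q (Suc m) + 2 * a * b * L / (Suc m)" for m
  have "decseq r"
  proof (rule decseq_SucI)
    fix m
    have "k * C (Suc m) = a * b * A (Suc m) / (s + Suc m)" by (rule kC)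
    also have "\<dots> \<le> a * b * A (Suc m) / Suc m"
      using a0 b0 cA_pos[of "Suc m"] s0
      by (intro divide_left_mono) (auto intro!: mult_pos_pos)
    also have "\<dots> \<le> a * b * (L / Suc m) / Suc m"
      using A_le[of "Suc m"] a0 b0
      by (intro divide_right_mono mult_left_mono) auto
    also have "\<dots> \<le> 2 * a * b * L / Suc m - 2 * a * b * L / Suc (Suc m)"
    proof -
      have gen: "\<And>X N :: real. X \<ge> 0 \<Longrightarrow> N \<ge> 1 \<Longrightarrow> X * (1 / N) / N \<le> 2 * X / N - 2 * X / (N + 1)"
      proof -
        fix X N :: real assume X: "X \<ge> 0" and N: "N \<ge> 1"
        have p: "N > 0" "N + 1 > 0" using N by auto
        have e1: "2 * X / N - 2 * X / (N + 1) = 2 * X / (N * (N + 1))" using p by (simp add: field_simps)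
        have "X * (1 / N) / N = X / (N * N)" by simp
        also have "\<dots> \<le> 2 * X / (N * (N + 1))"
          using X N p by (simp add: divide_simps) (use mult_right_mono[OF N X] in \<open>simp add: algebra_simps\<close>)
        finally show "X * (1 / N) / N \<le> 2 * X / N - 2 * X / (N + 1)" using e1 by simp
      qed
      have "a * b * L \<ge> 0" using a0 b0 L_pos by simp
      from gen[OF this, of "real (Suc m)"] show ?thesis by (simp add: mult.assoc)
    qed
    finally have "k * C (Suc m) \<le> 2 * a * b * L / Suc m - 2 * a * b * L / Suc (Suc m)" .
    then show "r (Suc m) \<le> r m"
      unfolding r_def using q_Suc_diff[of "Suc m"] by simp
  qed
  moreover have "r \<longlonglongrightarrow> L + 0"
    unfolding r_def
    by (intro tendsto_add LIMSEQ_Suc[OF q_lim] tendsto_divide_0[OF tendsto_const]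
        filterlim_at_top_imp_at_infinity filterlim_compose[OF filterlim_real_sequentially filterlim_Suc])
  ultimately have "L \<le> r (n - 1)" using decseq_ge by (metis add_0_right)
  then show ?thesis unfolding r_def using assms by simp
qed

end



lemma neg_ln_series:
  fixes x :: real assumes "0 \<le> x" "x < 1"
  shows "(\<lambda>n. x ^ Suc n / real (Suc n)) sums (- ln (1 - x))"
proof -
  have s: "summable (\<lambda>n. x ^ Suc n / real (Suc n))"
  proof (rule summable_comparison_test[where g="\<lambda>n. x ^ n"])
    show "\<exists>N. \<forall>n\<ge>N. norm (x ^ Suc n / real (Suc n)) \<le> x ^ n"
    proof (intro exI allI impI)
      fix n :: nat
      have "x ^ Suc n / real (Suc n) \<le> x ^ Suc n / 1"
        using assms by (intro divide_left_mono) auto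
      also have "\<dots> \<le> x ^ n" using assms by (simp add: mult_left_le_one_le)
      finally show "norm (x ^ Suc n / real (Suc n)) \<le> x ^ n" using assms by simp
    qed
    show "summable (\<lambda>n. x ^ n)" using assms by simp
  qed
  have "ln (1 - x) = (\<Sum>n. (-1)^n * (1 / real (n + 1)) * ((1 - x) - 1)^(Suc n))"
    by (rule ln_series) (use assms in auto)
  also have "\<dots> = (\<Sum>n. - (x ^ Suc n / real (Suc n)))"
  proof (rule suminf_cong)
    fix n
    have e: "(1 - x) - 1 = - x" by simp
    have "(-1::real)^n * ((1 - x) - 1)^(Suc n) = ((-1)^n * (-1)^n) * (- (x ^ Suc n))"
      unfolding e by (subst power_minus) simp
    also have "(-1::real)^n * (-1)^n = 1" by (simp add: power_mult_distrib[symmetric])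
    finally have "(-1::real)^n * ((1 - x) - 1)^(Suc n) = - (x ^ Suc n)" by simp
    then show "(-1)^n * (1 / real (n + 1)) * ((1 - x) - 1)^(Suc n) = - (x ^ Suc n / real (Suc n))"
      by (simp add: field_simps)
  qed
  also have "\<dots> = - (\<Sum>n. x ^ Suc n / real (Suc n))" by (rule suminf_minus[OF s])
  finally show ?thesis using s by (simp add: summable_sums)
qed

lemma neg_ln_series':
  fixes x :: real assumes "0 \<le> x" "x < 1"
  shows "(\<lambda>n. (1 / real n) * x ^ n) sums (- ln (1 - x))"
proof -
  have "(\<lambda>n. (\<lambda>n. (1 / real n) * x ^ n) (Suc n)) sums (- ln (1 - x))"
    using neg_ln_series[OF assms] by simp
  then show ?thesis by (subst (asm) sums_Suc_iff) simp
qed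

lemma neg_ln_nonneg: "0 \<le> x \<Longrightarrow> x < 1 \<Longrightarrow> - ln (1 - x) \<ge> (0::real)"
  by simp

context hyp begin

definition "S2 = (\<Sum>n. inverse (real n ^ 2))"

lemma S2_sum: "summable (\<lambda>n. inverse (real n ^ 2))"
  using inverse_power_summable[of 2] by simp

lemma K1_upper: assumes "0 \<le> x" "x < 1" shows "F x - L * (- ln (1 - x)) \<le> 1"
proof -
  have s1: "summable (\<lambda>n. A n * x ^ n)" using sumA assms by simp
  have s2: "(\<lambda>n. L * ((1 / real n) * x ^ n)) sums (L * (- ln (1 - x)))"
    by (rule sums_mult[OF neg_ln_series'[OF assms]])
  have "(\<lambda>n. A n * x ^ n - L * ((1 / real n) * x ^ n)) sums (F x - L * (- ln (1 - x)))"
    unfolding F_def by (rule sums_diff[OF summable_sums[OF s1] s2])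
  moreover have "(\<lambda>n. if n = 0 then 1 else 0) sums (1::real)"
    using sums_single[of 0 "\<lambda>_. 1::real"] by simp
  moreover have "A n * x ^ n - L * ((1 / real n) * x ^ n) \<le> (if n = 0 then 1 else 0)" for n
  proof (cases "n = 0")
    case False
    then have "A n \<le> L / n" using A_le by simp
    then have "A n * x ^ n \<le> L / n * x ^ n" using assms by (intro mult_right_mono) auto
    then show ?thesis using False by simp
  qed (simp add: A_def)
  ultimately show ?thesis by (rule sums_le[rotated 1])
qed

lemma K1_lower: assumes "0 \<le> x" "x < 1" shows "F x - L * (- ln (1 - x)) \<ge> - 2 * a * b * L * S2"
proof -
  have s1: "summable (\<lambda>n. A n * x ^ n)" using sumA assms by simp
  have s2: "(\<lambda>n. L * ((1 / real n) * x ^ n)) sums (L * (- ln (1 - x)))"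
    by (rule sums_mult[OF neg_ln_series'[OF assms]])
  have "(\<lambda>n. A n * x ^ n - L * ((1 / real n) * x ^ n)) sums (F x - L * (- ln (1 - x)))"
    unfolding F_def by (rule sums_diff[OF summable_sums[OF s1] s2])
  note m1 = this
  have m2: "(\<lambda>n. (- 2 * a * b * L) * inverse (real n ^ 2)) sums (- 2 * a * b * L * S2)"
    unfolding S2_def by (rule sums_mult[OF summable_sums[OF S2_sum]])
  have m3: "(- 2 * a * b * L) * inverse (real n ^ 2) \<le> A n * x ^ n - L * ((1 / real n) * x ^ n)" for n
  proof (cases "n = 0")
    case False
    then have n1: "n \<ge> 1" by simp
    have d: "A n - L / n \<le> 0" using A_le[OF n1] by simp
    have "A n - L / n = (q n - L) / n" unfolding q_def using False by (simp add: field_simps)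
    also have "\<dots> \<ge> (- 2 * a * b * L / n) / n"
      using q_lower[OF n1] by (intro divide_right_mono) auto
    finally have e: "A n - L / n \<ge> - 2 * a * b * L * inverse (real n ^ 2)"
      by (simp add: power2_eq_square field_simps)
    have "(A n - L / n) * 1 \<le> (A n - L / n) * x ^ n"
      using d assms by (intro mult_left_mono_neg) (auto simp: power_le_one)
    then show ?thesis using e by (simp add: algebra_simps)
  qed (use cA_pos in \<open>simp add: less_imp_le\<close>)
  show ?thesis by (rule sums_le[OF m3 m2 m1])
qed

end



context hyp begin

definition "e m = L - q (Suc m)"

lemma e_bounds: "0 \<le> e m" "e m \<le> 2 * a * b * L / real (Suc m)" "e m \<le> L"
proof -
  show "0 \<le> e m" unfolding e_def using q_le_L by simp
  show "e m \<le> 2 * a * b * L / real (Suc m)" unfolding e_def using q_lower[of "Suc m"] by simp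
  have "q (Suc m) \<ge> 0" unfolding q_def using cA_pos[of "Suc m"] by (intro mult_nonneg_nonneg) auto
  then show "e m \<le> L" unfolding e_def by simp
qed

lemma e_summable: assumes "0 \<le> x" "x < 1" shows "summable (\<lambda>m. e m * x ^ m)"
proof (rule summable_comparison_test[where g = "\<lambda>m. L * x ^ m"])
  show "\<exists>N. \<forall>n\<ge>N. norm (e n * x ^ n) \<le> L * x ^ n"
    using e_bounds assms by (auto intro!: mult_right_mono simp: abs_mult)
  show "summable (\<lambda>m. L * x ^ m)" using assms by (intro summable_mult) simp
qed

lemma LkG_repr: assumes "0 \<le> x" "x < 1" shows "L - k * G x = (1 - x) * (\<Sum>m. e m * x ^ m)"
proof -
  have c: "e m - (if m = 0 then 0 else e (m - 1)) = (if m = 0 then L else 0) - k * C m" for m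
  proof (cases m)
    case 0 then show ?thesis using q_Suc_diff[of 0] unfolding e_def by (simp add: q_def)
  next
    case (Suc j) then show ?thesis using q_Suc_diff[of "Suc j"] unfolding e_def by simp
  qed
  have s1: "(\<lambda>m. (if m = 0 then L else 0) * x ^ m) sums L"
  proof -
    have "(\<lambda>m. (if m = 0 then L else 0) * x ^ m) = (\<lambda>m. if m = 0 then L else 0)" by (rule ext) auto
    then show ?thesis using sums_single[of 0 "\<lambda>_. L"] by simp
  qed
  have s2: "(\<lambda>m. k * C m * x ^ m) sums (k * G x)"
    unfolding G_def mult.assoc using sumC[of x] assms by (intro sums_mult summable_sums) auto
  have "(\<lambda>m. ((if m = 0 then L else 0) - k * C m) * x ^ m) sums (L - k * G x)"
    using sums_diff[OF s1 s2] by (simp add: algebra_simps)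
  then have "L - k * G x = (\<Sum>m. ((if m = 0 then L else 0) - k * C m) * x ^ m)"
    by (simp add: sums_iff)
  also have "\<dots> = (\<Sum>m. (e m - (if m = 0 then 0 else e (m - 1))) * x ^ m)"
    using c by simp
  also have "\<dots> = (1 - x) * (\<Sum>m. e m * x ^ m)"
    by (rule mult_1mx[OF e_summable[OF assms], symmetric])
  finally show ?thesis .
qed

lemma LkG_nonneg: assumes "0 \<le> x" "x < 1" shows "k * G x \<le> L"
proof -
  have "(\<Sum>m. e m * x ^ m) \<ge> 0"
    using e_summable[OF assms] e_bounds assms by (intro suminf_nonneg) auto
  then have "(1 - x) * (\<Sum>m. e m * x ^ m) \<ge> 0" using assms by (intro mult_nonneg_nonneg) auto
  then show ?thesis using LkG_repr[OF assms] by linarith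
qed

lemma LkG_bound: assumes "0 \<le> x" "x < 1"
  shows "x * (L - k * G x) \<le> 2 * a * b * L * (1 - x) * (- ln (1 - x))"
proof -
  have m1: "(\<lambda>m. x * (e m * x ^ m)) sums (x * (\<Sum>m. e m * x ^ m))"
    by (intro sums_mult summable_sums e_summable assms)
  have m2: "(\<lambda>m. 2 * a * b * L * (x ^ Suc m / real (Suc m))) sums (2 * a * b * L * (- ln (1 - x)))"
    by (intro sums_mult neg_ln_series assms)
  have m3: "x * (e m * x ^ m) \<le> 2 * a * b * L * (x ^ Suc m / real (Suc m))" for m
  proof -
    have "x * (e m * x ^ m) = e m * x ^ Suc m" by simp
    also have "\<dots> \<le> (2 * a * b * L / real (Suc m)) * x ^ Suc m"
      using e_bounds(2)[of m] assms by (intro mult_right_mono) auto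
    finally show ?thesis by simp
  qed
  have "x * (\<Sum>m. e m * x ^ m) \<le> 2 * a * b * L * (- ln (1 - x))"
    by (rule sums_le[OF _ m1 m2]) (use m3 in auto)
  then have "(1 - x) * (x * (\<Sum>m. e m * x ^ m)) \<le> (1 - x) * (2 * a * b * L * (- ln (1 - x)))"
    using assms by (intro mult_left_mono) auto
  then show ?thesis unfolding LkG_repr[OF assms] by (simp add: algebra_simps)
qed

lemma E_bound: "E n \<le> (s + 1) * L / (k * real (Suc n))"
proof -
  have c2: "real (Suc n) * C (Suc n) = a * b / (s + 1) * E n"
    using coef2[of n] by (simp add: diffs_def)
  have "k * C (Suc n) = a * b * A (Suc n) / (s + Suc n)" by (rule kC)
  also have "\<dots> \<le> a * b * A (Suc n) / Suc n"
    using a0 b0 cA_pos[of "Suc n"] s0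
    by (intro divide_left_mono) (auto intro!: mult_pos_pos)
  also have "\<dots> \<le> a * b * (L / Suc n) / Suc n"
    using A_le[of "Suc n"] a0 b0
    by (intro divide_right_mono mult_left_mono) auto
  finally have kc: "k * C (Suc n) \<le> a * b * L / (real (Suc n))^2"
    by (simp add: power2_eq_square)
  have "E n = (s + 1) / (a * b) * (real (Suc n) * C (Suc n))"
    using c2 a0 b0 s0 by (simp add: field_simps)
  also have "\<dots> = (s + 1) / (a * b * k) * real (Suc n) * (k * C (Suc n))"
  proof -
    have "k \<noteq> 0" "a \<noteq> 0" "b \<noteq> 0" using k0 a0 b0 by auto
    then show ?thesis by (simp add: field_simps)
  qed
  also have "\<dots> \<le> (s + 1) / (a * b * k) * real (Suc n) * (a * b * L / (real (Suc n))^2)"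
    using kc a0 b0 k0 s0 by (intro mult_left_mono) (auto intro!: mult_nonneg_nonneg)
  also have "\<dots> = (s + 1) * L / (k * real (Suc n))"
  proof -
    have gen: "\<And>X k N P. X \<noteq> 0 \<Longrightarrow> k \<noteq> 0 \<Longrightarrow> N \<noteq> 0 \<Longrightarrow>
       P / (X * k) * N * (X * L / N^2) = P * L / (k * N)" for L :: real
      by (simp add: field_simps power2_eq_square)
    show ?thesis by (rule gen) (use a0 b0 k0 in auto)
  qed
  finally show ?thesis .
qed

lemma hkG_bound: assumes "0 \<le> x" "x < 1"
  shows "x * (hfun a b x - k * G x) \<le> a * b * L * (1 - x) * (- ln (1 - x))"
proof -
  have m1: "(\<lambda>m. x * (E m * x ^ m)) sums (x * H x)"
    unfolding H_def by (intro sums_mult summable_sums sumE) (use assms in auto)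
  have m2: "(\<lambda>m. (s + 1) * L / k * (x ^ Suc m / real (Suc m))) sums ((s + 1) * L / k * (- ln (1 - x)))"
    by (intro sums_mult neg_ln_series assms)
  have m3: "x * (E m * x ^ m) \<le> (s + 1) * L / k * (x ^ Suc m / real (Suc m))" for m
  proof -
    have "x * (E m * x ^ m) = E m * x ^ Suc m" by simp
    also have "\<dots> \<le> ((s + 1) * L / (k * real (Suc m))) * x ^ Suc m"
      using E_bound[of m] assms by (intro mult_right_mono) auto
    finally show ?thesis by simp
  qed
  have xH: "x * H x \<le> (s + 1) * L / k * (- ln (1 - x))"
    by (rule sums_le[OF _ m1 m2]) (use m3 in auto)
  have "x * (hfun a b x - k * G x) = (a*b)^2 / (s*(s+1)) * (1-x) * (x * H x)"
    unfolding hfun_eq by (simp add: algebra_simps)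
  also have "\<dots> \<le> (a*b)^2 / (s*(s+1)) * (1-x) * ((s + 1) * L / k * (- ln (1 - x)))"
    using xH assms s0 by (intro mult_left_mono) auto
  also have "\<dots> = a * b * L * (1 - x) * (- ln (1 - x))"
  proof -
    have gen: "\<And>X S T Y Z. X \<noteq> 0 \<Longrightarrow> S \<noteq> 0 \<Longrightarrow> T \<noteq> 0 \<Longrightarrow>
       X^2 / (S*T) * Y * (T * L / (X / S) * Z) = X * L * Y * Z" for L :: real
      by (simp add: field_simps power2_eq_square)
    have "s + 1 \<noteq> 0" using s0 by simp
    then show ?thesis unfolding k_def using gen[of "a*b" s "s+1"] a0 b0 s0 by simp
  qed
  finally show ?thesis .
qed

lemma Lh_bound: assumes "0 \<le> x" "x < 1"
  shows "x * \<bar>L - hfun a b x\<bar> \<le> 3 * a * b * L * (1 - x) * (- ln (1 - x))"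
proof -
  have p1: "k * G x \<le> L" by (rule LkG_nonneg[OF assms])
  have p2: "k * G x \<le> hfun a b x" by (rule h_ge[OF assms])
  have b1: "x * (L - k * G x) \<le> 2 * a * b * L * (1 - x) * (- ln (1 - x))" by (rule LkG_bound[OF assms])
  have b2: "x * (hfun a b x - k * G x) \<le> a * b * L * (1 - x) * (- ln (1 - x))" by (rule hkG_bound[OF assms])
  have nn: "0 \<le> a * b * L * (1 - x) * (- ln (1 - x))"
    using a0 b0 L_pos assms by (intro mult_nonneg_nonneg) auto
  have "\<bar>L - hfun a b x\<bar> \<le> (L - k * G x) + (hfun a b x - k * G x)" using p1 p2 by linarith
  then have "x * \<bar>L - hfun a b x\<bar> \<le> x * (L - k * G x) + x * (hfun a b x - k * G x)"
    using assms by (metis distrib_left mult_left_mono)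
  also have "\<dots> \<le> 2 * a * b * L * (1 - x) * (- ln (1 - x)) + a * b * L * (1 - x) * (- ln (1 - x))"
    using b1 b2 by linarith
  finally show ?thesis by (simp add: algebra_simps)
qed

end



lemma ell_le1: fixes x :: real assumes "0 \<le> x" "x < 1" shows "- ln (1 - x) \<le> x / (1 - x)"
proof -
  have "ln (inverse (1 - x)) \<le> inverse (1 - x) - 1" using assms by (intro ln_le_minus_one) auto
  moreover have "ln (inverse (1 - x)) = - ln (1 - x)" by (simp add: ln_inverse)
  moreover have "inverse (1 - x) - 1 = x / (1 - x)" using assms by (simp add: field_simps)
  ultimately show ?thesis by simp
qed

lemma ell_le2: fixes y :: real assumes "0 < y" shows "- ln y \<le> 2 / sqrt y"
proof -
  have "ln (inverse (sqrt y)) \<le> inverse (sqrt y) - 1" using assms by (intro ln_le_minus_one) auto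
  moreover have "ln (inverse (sqrt y)) = - ln y / 2" using assms by (simp add: ln_inverse ln_sqrt)
  ultimately have "- ln y \<le> 2 * inverse (sqrt y) - 2" by simp
  then show ?thesis by (simp add: divide_inverse)
qed

lemma Y_bound: fixes x :: real assumes "0 < x" "x < 1" shows "(1 - x) * (- ln (1 - x))^2 \<le> 8 * x"
proof (cases "x \<le> 1/2")
  case True
  have l0: "- ln (1 - x) \<ge> 0" using assms by simp
  have l1: "- ln (1 - x) \<le> x / (1 - x)" by (rule ell_le1) (use assms in auto)
  have "x / (1 - x) \<le> 1" using True by (simp add: divide_le_eq)
  then have l2: "- ln (1 - x) \<le> 1" using l1 by simp
  have "(1 - x) * (- ln (1 - x))^2 = (- ln (1 - x)) * ((1 - x) * (- ln (1 - x)))"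
    by (simp add: power2_eq_square)
  also have "\<dots> \<le> 1 * x"
  proof (rule mult_mono)
    show "(1 - x) * (- ln (1 - x)) \<le> x"
      using l1 assms mult_left_mono[OF l1, of "1 - x"] by (simp add: field_simps)
  next
    show "0 \<le> (1 - x) * (- ln (1 - x))" using l0 assms by (intro mult_nonneg_nonneg) auto
  qed (use l2 l0 assms in auto)
  finally show ?thesis using assms by simp
next
  case False
  have y: "1 - x > 0" using assms by simp
  have l0: "- ln (1 - x) \<ge> 0" using assms by simp
  have l: "- ln (1 - x) \<le> 2 / sqrt (1 - x)" by (rule ell_le2[OF y])
  have "(- ln (1 - x))^2 \<le> (2 / sqrt (1 - x))^2" using l l0 by (intro power_mono) auto
  also have "\<dots> = 4 / (1 - x)" using y by (simp add: power_divide)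
  finally have "(1 - x) * (- ln (1 - x))^2 \<le> (1 - x) * (4 / (1 - x))" using y by (intro mult_left_mono) auto
  also have "\<dots> = 4" using y by (metis less_irrefl times_divide_eq_right nonzero_mult_div_cancel_left)
  finally show ?thesis using False by simp
qed

lemma roots_gen:
  fixes F h P :: real
  assumes F: "F > 0" and h: "h > 0" and P: "P \<ge> F"
  defines "D \<equiv> P^2 - 8 * h * F"
  shows "(P - sqrt D) / (2 * h) > 0" "(P - sqrt D) / (2 * h) \<le> 8"
    "(P + sqrt D) / (2 * h) = P / h - (P - sqrt D) / (2 * h)"
proof -
  show "(P + sqrt D) / (2 * h) = P / h - (P - sqrt D) / (2 * h)" using h by (simp add: field_simps)
  have P0: "P > 0" using F P by simp
  have "0 < P - sqrt D \<and> P - sqrt D \<le> 16 * h"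
  proof (cases "D \<ge> 0")
    case True
    have sD: "sqrt D \<ge> 0" "(sqrt D)^2 = D" using True by auto
    have "D < P^2" unfolding D_def using h F by simp
    then have "sqrt D < P" using P0 True by (metis real_sqrt_less_iff real_sqrt_abs abs_of_pos)
    have eq: "P - sqrt D = 8 * h * F / (P + sqrt D)"
    proof -
      have "(P - sqrt D) * (P + sqrt D) = P^2 - D" using sD by (simp add: algebra_simps power2_eq_square)
      also have "\<dots> = 8 * h * F" unfolding D_def by simp
      moreover have "P + sqrt D > 0" using P0 sD(1) by linarith
      ultimately show ?thesis by (simp add: eq_divide_eq)
    qed
    have Ppos: "P + sqrt D \<ge> P" using sD(1) by simp
    have "P + sqrt D > 0" using P0 sD(1) by linarith
    have "8 * h * F / (P + sqrt D) \<le> 8 * h * F / P"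
      using P0 Ppos h F \<open>P + sqrt D > 0\<close> by (intro divide_left_mono) (auto intro!: mult_pos_pos)
    also have "\<dots> \<le> 8 * h * F / F" using P0 h F P by (intro divide_left_mono) auto
    also have "\<dots> = 8 * h" using F by simp
    finally have "P - sqrt D \<le> 8 * h" using eq by simp
    moreover have "8 * h * F / (P + sqrt D) > 0" using h F \<open>P + sqrt D > 0\<close> by simp
    ultimately have "P - sqrt D > 0" "P - sqrt D \<le> 16 * h" using eq h by linarith+
    then show ?thesis by simp
  next
    case False
    have nD: "sqrt D = - sqrt (- D)" by (simp add: real_sqrt_minus)
    have "P^2 < 8 * h * F" using False unfolding D_def by simp
    moreover have "F^2 \<le> P^2" using F P by (intro power_mono) auto
    ultimately have "F * F < 8 * h * F" by (simp add: power2_eq_square)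
    then have Fh: "F < 8 * h" using F by simp
    have "-D \<le> 8 * h * F" unfolding D_def by simp
    then have s1: "sqrt (-D) \<le> sqrt (8 * h * F)" by simp
    have "P^2 \<le> 8 * h * F" using \<open>P^2 < 8 * h * F\<close> by simp
    then have s2: "P \<le> sqrt (8 * h * F)" using P0 by (metis real_le_rsqrt)
    have "8 * h * F \<le> 8 * h * (8 * h)" using Fh h by (intro mult_left_mono) auto
    then have "8 * h * F \<le> (8 * h)^2" by (simp add: power2_eq_square)
    then have "sqrt (8 * h * F) \<le> sqrt ((8 * h)^2)" by (rule real_sqrt_le_mono)
    also have "sqrt ((8 * h)^2) = 8 * h" using h by (simp only: real_sqrt_abs)
    finally have s3: "sqrt (8 * h * F) \<le> 8 * h" .
    have "P - sqrt D = P + sqrt (-D)" using nD by simp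
    moreover have "P + sqrt (-D) > 0"
    proof -
      have "sqrt (-D) \<ge> 0" using False by simp
      then show ?thesis using P0 by linarith
    qed
    moreover have "P + sqrt (-D) \<le> 16 * h" using s1 s2 s3 by linarith
    ultimately show ?thesis by simp
  qed
  then show "(P - sqrt D) / (2 * h) > 0" "(P - sqrt D) / (2 * h) \<le> 8"
    using h by (auto simp: divide_le_eq)
qed

lemma quad_sign:
  fixes F h P t :: real
  assumes F: "F > 0" and h: "h > 0"
  defines "D \<equiv> P^2 - 8 * h * F"
  shows "(P - sqrt D) / (2 * h) \<le> t \<Longrightarrow> t \<le> (P + sqrt D) / (2 * h) \<Longrightarrow> h * t^2 - P * t + 2 * F \<le> 0"
    and "(P + sqrt D) / (2 * h) \<le> t \<Longrightarrow> h * t^2 - P * t + 2 * F \<ge> 0"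
proof -
  have fact: "h * t^2 - P * t + 2 * F = h * (t - (P + sqrt D) / (2 * h)) * (t - (P - sqrt D) / (2 * h))"
    if "D \<ge> 0"
  proof -
    have sD: "(sqrt D)^2 = D" using that by simp
    have e1: "h * (t - (P + sqrt D) / (2 * h)) * (t - (P - sqrt D) / (2 * h))
        = h * t^2 - P * t + (P^2 - (sqrt D)^2) / (4 * h)"
      using h by (simp add: field_simps power2_eq_square)
    have "P^2 - (sqrt D)^2 = 8 * h * F" using sD by (simp add: D_def)
    then have e2: "(P^2 - (sqrt D)^2) / (4 * h) = 2 * F" using h by simp
    show ?thesis using e1 e2 by simp
  qed
  have cs: "4 * h * (h * t^2 - P * t + 2 * F) = (2 * h * t - P)^2 - D"
    unfolding D_def by (simp add: algebra_simps power2_eq_square)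
  show "h * t^2 - P * t + 2 * F \<le> 0" if "(P - sqrt D) / (2 * h) \<le> t" "t \<le> (P + sqrt D) / (2 * h)"
  proof (cases "D \<ge> 0")
    case True
    have "h * (t - (P + sqrt D) / (2 * h)) \<le> 0" using that h by (intro mult_nonneg_nonpos) auto
    moreover have "t - (P - sqrt D) / (2 * h) \<ge> 0" using that by simp
    ultimately show ?thesis unfolding fact[OF True] by (rule mult_nonpos_nonneg)
  next
    case False
    then have "sqrt D < 0" by simp
    then have "(P + sqrt D) / (2 * h) < (P - sqrt D) / (2 * h)" using h by (intro divide_strict_right_mono) auto
    then show ?thesis using that by simp
  qed
  show "h * t^2 - P * t + 2 * F \<ge> 0" if "(P + sqrt D) / (2 * h) \<le> t"
  proof (cases "D \<ge> 0")
    case True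
    have "sqrt D \<ge> 0" using True by simp
    then have "(P - sqrt D) / (2 * h) \<le> (P + sqrt D) / (2 * h)" using h by (intro divide_right_mono) auto
    then have "t - (P - sqrt D) / (2 * h) \<ge> 0" using that by simp
    moreover have "h * (t - (P + sqrt D) / (2 * h)) \<ge> 0" using that h by (intro mult_nonneg_nonneg) auto
    ultimately show ?thesis unfolding fact[OF True] by (rule mult_nonneg_nonneg[rotated])
  next
    case False
    then have "4 * h * (h * t^2 - P * t + 2 * F) > 0" unfolding cs by (smt (verit) zero_le_power2)
    then show ?thesis using h by (smt (verit) mult_pos_neg zero_less_mult_iff)
  qed
qed




context hyp begin

definition "K1 = 1 + 2 * a * b * L * S2"
definition "Kpsi = (K1 + 24 * a * b * L) / k"

lemma S2_nonneg: "S2 \<ge> 0"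
  unfolding S2_def by (intro suminf_nonneg S2_sum) simp

lemma K1_abs: assumes "0 \<le> x" "x < 1" shows "\<bar>F x - L * (- ln (1 - x))\<bar> \<le> K1"
proof -
  have "2 * a * b * L * S2 \<ge> 0" using a0 b0 L_pos S2_nonneg by simp
  then show ?thesis using K1_upper[OF assms] K1_lower[OF assms] unfolding K1_def by linarith
qed

lemma ellLh: assumes "0 \<le> x" "x < 1" shows "\<bar>(- ln (1 - x)) * (L - hfun a b x)\<bar> \<le> 24 * a * b * L"
proof (cases "x = 0")
  case True then show ?thesis using a0 b0 L_pos by simp
next
  case False
  then have x0: "x > 0" using assms by simp
  have l0: "- ln (1 - x) \<ge> 0" using assms by simp
  have "x * \<bar>(- ln (1 - x)) * (L - hfun a b x)\<bar> = (- ln (1 - x)) * (x * \<bar>L - hfun a b x\<bar>)"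
    using l0 by (simp add: abs_mult)
  also have "\<dots> \<le> (- ln (1 - x)) * (3 * a * b * L * (1 - x) * (- ln (1 - x)))"
    using Lh_bound[OF assms] l0 by (intro mult_left_mono) auto
  also have "\<dots> = 3 * a * b * L * ((1 - x) * (- ln (1 - x))^2)" by (simp add: power2_eq_square)
  also have "\<dots> \<le> 3 * a * b * L * (8 * x)"
    using Y_bound[OF x0 assms(2)] a0 b0 L_pos by (intro mult_left_mono) auto
  finally have "x * \<bar>(- ln (1 - x)) * (L - hfun a b x)\<bar> \<le> x * (24 * a * b * L)"
    by (simp add: algebra_simps)
  then show ?thesis using x0 by simp
qed

lemma psi_bound: assumes "0 \<le> x" "x < 1" shows "\<bar>F x / hfun a b x + ln (1 - x)\<bar> \<le> Kpsi"
proof -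
  have h: "hfun a b x \<ge> k" by (rule h_pos[OF assms])
  then have h0: "hfun a b x > 0" using k0 by simp
  have "F x / hfun a b x + ln (1 - x)
      = ((F x - L * (- ln (1 - x))) + (- ln (1 - x)) * (L - hfun a b x)) / hfun a b x"
    using h0 by (simp add: field_simps)
  moreover have "\<bar>(F x - L * (- ln (1 - x))) + (- ln (1 - x)) * (L - hfun a b x)\<bar> \<le> K1 + 24 * a * b * L"
    using K1_abs[OF assms] ellLh[OF assms] by linarith
  ultimately have "\<bar>F x / hfun a b x + ln (1 - x)\<bar> \<le> (K1 + 24 * a * b * L) / hfun a b x"
    using h0 by (simp add: abs_div divide_right_mono)
  also have "\<dots> \<le> (K1 + 24 * a * b * L) / k"
  proof (rule divide_left_mono)
    show "0 \<le> K1 + 24 * a * b * L" using K1_abs[OF assms] a0 b0 L_pos by (smt (verit) mult_pos_pos abs_ge_zero)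
  qed (use h k0 in auto)
  finally show ?thesis unfolding Kpsi_def .
qed

lemma P_pos: assumes "0 \<le> x" "x < 1" shows "- gfun a b x \<ge> F x" "F x > 0"
  using G_ge1[OF assms] F_ge1[OF assms] k0 unfolding gfun_eq by auto

lemma Delta_eq: "Deltafun a b x = (- gfun a b x)^2 - 8 * hfun a b x * F x"
  unfolding Deltafun_def F_eq by simp

lemma rminus_bounds: assumes "0 \<le> x" "x < 1"
  shows "(- gfun a b x - sqrt (Deltafun a b x)) / (2 * hfun a b x) > 0"
    "(- gfun a b x - sqrt (Deltafun a b x)) / (2 * hfun a b x) \<le> 8"
    "(- gfun a b x + sqrt (Deltafun a b x)) / (2 * hfun a b x) =
       (- gfun a b x) / hfun a b x - (- gfun a b x - sqrt (Deltafun a b x)) / (2 * hfun a b x)"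
  using roots_gen[OF P_pos(2)[OF assms] _ P_pos(1)[OF assms], of "hfun a b x"]
    h_pos[OF assms] k0 unfolding Delta_eq by auto

lemma phi_minus_le: assumes "0 \<le> x" "x < 1" shows "phi_minus a b x \<le> 8"
proof -
  have "ln (1 - x) \<le> 0" using assms by simp
  then show ?thesis using rminus_bounds(2)[OF assms] unfolding phi_minus_def by linarith
qed

lemma phi_minus_0: "phi_minus a b 0 > 0"
  using rminus_bounds(1)[of 0] unfolding phi_minus_def by simp

lemma phi_plus_bounds: assumes "0 \<le> x" "x < 1"
  shows "phi_plus a b x \<le> Kpsi + 2" "phi_plus a b x \<ge> - Kpsi - 8"
proof -
  have h: "hfun a b x \<ge> k" by (rule h_pos[OF assms])
  then have h0: "hfun a b x > 0" using k0 by simp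
  have "(- gfun a b x) / hfun a b x = F x / hfun a b x + 2 * (k * G x / hfun a b x)"
    unfolding gfun_eq using h0 by (simp add: field_simps)
  moreover have "0 \<le> k * G x / hfun a b x" "k * G x / hfun a b x \<le> 1"
    using h_ge[OF assms] h0 G_ge1[OF assms] k0 by auto
  moreover have "phi_plus a b x = ln (1 - x) + (- gfun a b x) / hfun a b x
      - (- gfun a b x - sqrt (Deltafun a b x)) / (2 * hfun a b x)"
    unfolding phi_plus_def rminus_bounds(3)[OF assms] by simp
  ultimately show "phi_plus a b x \<le> Kpsi + 2" "phi_plus a b x \<ge> - Kpsi - 8"
    using psi_bound[OF assms] rminus_bounds(1,2)[OF assms] by (smt (verit))+
qed

lemma bdd_minus: "bdd_above (phi_minus a b ` {0..<1})"
  by (rule bdd_aboveI[of _ 8]) (auto intro: phi_minus_le)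
lemma bdd_plus_above: "bdd_above (phi_plus a b ` {0..<1})"
  by (rule bdd_aboveI[of _ "Kpsi + 2"]) (auto intro: phi_plus_bounds)
lemma bdd_plus_below: "bdd_below (phi_plus a b ` {0..<1})"
  by (rule bdd_belowI[of _ "- Kpsi - 8"]) (auto intro: phi_plus_bounds)

lemma dm_le: "x \<in> {0..<1} \<Longrightarrow> phi_minus a b x \<le> delta_minus a b"
  unfolding delta_minus_def by (rule cSUP_upper[OF _ bdd_minus])
lemma dp_ge: "x \<in> {0..<1} \<Longrightarrow> delta_plus a b \<le> phi_plus a b x"
  unfolding delta_plus_def by (rule cINF_lower[OF bdd_plus_below])
lemma a0_ge: "x \<in> {0..<1} \<Longrightarrow> phi_plus a b x \<le> alpha0 a b"
  unfolding alpha0_def by (rule cSUP_upper[OF _ bdd_plus_above])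

end



lemma U2_alg:
  fixes F F1 F2 Y T :: real
  assumes "Y \<noteq> 0" "T \<noteq> 0"
  shows "(F2 * T - F1 * (1 / Y)) / (T * T)
         - (F1 * (Y * T^2) - F * (2 * T - T^2)) / ((Y * T^2) * (Y * T^2))
       = (Y^2 * F2 * T^2 - (2 * Y * F1 + F) * T + 2 * F) / (Y^2 * T^3)"
  using assms by (simp add: field_simps power2_eq_square power3_eq_cube)

lemma U1_alg:
  fixes F F1 y T :: real
  assumes "y \<noteq> 1" "T \<noteq> 0"
  shows "(F1 * T - F * (1 / (1 - y))) / (T * T) = F1 / T - F / ((1 - y) * T^2)"
proof -
  have y: "1 - y \<noteq> 0" using assms by simp
  show ?thesis using y assms(2) by (simp add: field_simps power2_eq_square)
qed

lemma dT: fixes c y :: real assumes "y < 1"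
  shows "((\<lambda>y. c - ln (1 - y)) has_real_derivative 1 / (1 - y)) (at y)"
  using assms by (auto intro!: derivative_eq_intros simp: divide_simps)

lemma dW: fixes c y :: real assumes "y < 1"
  shows "((\<lambda>y. (1 - y) * (c - ln (1 - y))^2) has_real_derivative
           (2 * (c - ln (1 - y)) - (c - ln (1 - y))^2)) (at y)"
proof -
  have "((\<lambda>y. (1 - y) * (c - ln (1 - y))^2) has_real_derivative
           (-1) * (c - ln (1 - y))^2 + (1 - y) * (of_nat 2 * (c - ln (1 - y)) ^ (2 - 1) * (1 / (1 - y)))) (at y)"
    by (intro DERIV_mult DERIV_pow dT assms derivative_eq_intros) (use assms in auto)
  moreover have "(-1) * (c - ln (1 - y))^2 + (1 - y) * (of_nat 2 * (c - ln (1 - y)) ^ (2 - 1) * (1 / (1 - y)))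
      = 2 * (c - ln (1 - y)) - (c - ln (1 - y))^2"
    using assms by (simp add: field_simps)
  ultimately show ?thesis by simp
qed

context hyp begin

definition "U1 c y = F1 y / (c - ln (1 - y)) - F y / ((1 - y) * (c - ln (1 - y))^2)"
definition "Qf c y = hfun a b y * (c - ln (1 - y))^2 - (- gfun a b y) * (c - ln (1 - y)) + 2 * F y"

lemma du: assumes "0 \<le> y" "y < 1" "c > 0"
  shows "((\<lambda>y. F y / (c - ln (1 - y))) has_real_derivative U1 c y) (at y)"
proof -
  have "ln (1 - y) \<le> 0" using assms by simp
  then have T: "c - ln (1 - y) > 0" using assms by linarith
  have "((\<lambda>y. F y / (c - ln (1 - y))) has_real_derivative
      (F1 y * (c - ln (1 - y)) - F y * (1 / (1 - y))) / ((c - ln (1 - y)) * (c - ln (1 - y)))) (at y)"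
    by (rule DERIV_divide[OF dF dT]) (use assms T in auto)
  then show ?thesis unfolding U1_def using U1_alg[of y "c - ln (1 - y)"] assms T by simp
qed

lemma dU1: assumes "0 \<le> y" "y < 1" "c > 0"
  shows "(U1 c has_real_derivative Qf c y / ((1 - y)^2 * (c - ln (1 - y))^3)) (at y)"
proof -
  have "ln (1 - y) \<le> 0" using assms by simp
  then have T: "c - ln (1 - y) > 0" using assms by linarith
  have W: "(1 - y) * (c - ln (1 - y))^2 \<noteq> 0" using assms T by simp
  have d1: "((\<lambda>y. F1 y / (c - ln (1 - y))) has_real_derivative
      (F2 y * (c - ln (1 - y)) - F1 y * (1 / (1 - y))) / ((c - ln (1 - y)) * (c - ln (1 - y)))) (at y)"
    by (rule DERIV_divide[OF dF1 dT]) (use assms T in auto)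
  have d2: "((\<lambda>y. F y / ((1 - y) * (c - ln (1 - y))^2)) has_real_derivative
      (F1 y * ((1 - y) * (c - ln (1 - y))^2) - F y * (2 * (c - ln (1 - y)) - (c - ln (1 - y))^2))
        / (((1 - y) * (c - ln (1 - y))^2) * ((1 - y) * (c - ln (1 - y))^2))) (at y)"
    by (rule DERIV_divide[OF dF dW]) (use assms W in auto)
  have "(U1 c has_real_derivative
      (F2 y * (c - ln (1 - y)) - F1 y * (1 / (1 - y))) / ((c - ln (1 - y)) * (c - ln (1 - y)))
      - (F1 y * ((1 - y) * (c - ln (1 - y))^2) - F y * (2 * (c - ln (1 - y)) - (c - ln (1 - y))^2))
        / (((1 - y) * (c - ln (1 - y))^2) * ((1 - y) * (c - ln (1 - y))^2))) (at y)"
    (is "(_ has_real_derivative ?E) _")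
    unfolding U1_def[abs_def] by (rule DERIV_diff[OF d1 d2])
  note D = this
  have "\<bar>y\<bar> < 1" using assms by simp
  have "?E = ((1 - y)^2 * F2 y * (c - ln (1 - y))^2 - (2 * (1 - y) * F1 y + F y) * (c - ln (1 - y))
       + 2 * F y) / ((1 - y)^2 * (c - ln (1 - y))^3)"
    by (rule U2_alg) (use assms T in auto)
  also have "\<dots> = Qf c y / ((1 - y)^2 * (c - ln (1 - y))^3)"
    unfolding Qf_def hfun_F2[OF \<open>\<bar>y\<bar> < 1\<close>] gfun_F1[OF \<open>\<bar>y\<bar> < 1\<close>] by simp
  finally show ?thesis using D by simp
qed

end



context hyp begin

lemma Qf_nonpos: assumes "0 \<le> y" "y < 1" "phi_minus a b y \<le> c" "c \<le> phi_plus a b y"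
  shows "Qf c y \<le> 0"
proof -
  have h0: "hfun a b y > 0" using h_pos[OF assms(1,2)] k0 by simp
  have "(- gfun a b y - sqrt ((- gfun a b y)^2 - 8 * hfun a b y * F y)) / (2 * hfun a b y) \<le> c - ln (1 - y)"
       "c - ln (1 - y) \<le> (- gfun a b y + sqrt ((- gfun a b y)^2 - 8 * hfun a b y * F y)) / (2 * hfun a b y)"
    using assms(3,4) unfolding phi_minus_def phi_plus_def Delta_eq by linarith+
  from quad_sign(1)[OF P_pos(2)[OF assms(1,2)] h0 this] show ?thesis unfolding Qf_def .
qed

lemma Qf_nonneg: assumes "0 \<le> y" "y < 1" "phi_plus a b y \<le> c"
  shows "Qf c y \<ge> 0"
proof -
  have h0: "hfun a b y > 0" using h_pos[OF assms(1,2)] k0 by simp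
  have "(- gfun a b y + sqrt ((- gfun a b y)^2 - 8 * hfun a b y * F y)) / (2 * hfun a b y) \<le> c - ln (1 - y)"
    using assms(3) unfolding phi_plus_def Delta_eq by linarith
  from quad_sign(2)[OF P_pos(2)[OF assms(1,2)] h0 this] show ?thesis unfolding Qf_def .
qed

lemma T_pos: fixes y c :: real shows "0 \<le> y \<Longrightarrow> y < 1 \<Longrightarrow> c > 0 \<Longrightarrow> c - ln (1 - y) > 0"
proof -
  assume "0 \<le> y" "y < 1" "c > 0"
  moreover have "ln (1 - y) \<le> 0" using \<open>0 \<le> y\<close> \<open>y < 1\<close> by simp
  ultimately show ?thesis by linarith
qed

lemma U1_anti: assumes "c > 0" "\<And>y. 0 < y \<Longrightarrow> y < 1 \<Longrightarrow> Qf c y \<le> 0" "0 < y1" "y1 \<le> y2" "y2 < 1"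
  shows "U1 c y2 \<le> U1 c y1"
proof (rule DERIV_nonpos_imp_nonincreasing[OF assms(4)])
  fix x assume x: "y1 \<le> x" "x \<le> y2"
  then have x0: "0 \<le> x" "x < 1" "0 < x" using assms by auto
  have "(1 - x)^2 * (c - ln (1 - x))^3 > 0" using T_pos[OF x0(1,2) assms(1)] x0 by simp
  then have "Qf c x / ((1 - x)^2 * (c - ln (1 - x))^3) \<le> 0"
    using assms(2)[OF x0(3,2)] by (simp add: divide_nonpos_pos)
  then show "\<exists>y. DERIV (U1 c) x :> y \<and> y \<le> 0" using dU1[OF x0(1,2) assms(1)] by blast
qed

lemma U1_mono: assumes "c > 0" "\<And>y. 0 < y \<Longrightarrow> y < 1 \<Longrightarrow> Qf c y \<ge> 0" "0 < y1" "y1 \<le> y2" "y2 < 1"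
  shows "U1 c y1 \<le> U1 c y2"
proof (rule DERIV_nonneg_imp_nondecreasing[OF assms(4)])
  fix x assume x: "y1 \<le> x" "x \<le> y2"
  then have x0: "0 \<le> x" "x < 1" "0 < x" using assms by auto
  have "(1 - x)^2 * (c - ln (1 - x))^3 > 0" using T_pos[OF x0(1,2) assms(1)] x0 by simp
  then have "Qf c x / ((1 - x)^2 * (c - ln (1 - x))^3) \<ge> 0"
    using assms(2)[OF x0(3,2)] by simp
  then show "\<exists>y. DERIV (U1 c) x :> y \<and> y \<ge> 0" using dU1[OF x0(1,2) assms(1)] by blast
qed

definition "ff c y = F y / (c - ln (1 - y)) + F (1 - y) / (c - ln y)"

lemma ff_sym: "ff c (1 - y) = ff c y"
  unfolding ff_def by simp

lemma dff: assumes "c > 0" "0 < y" "y < 1"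
  shows "(ff c has_real_derivative U1 c y - U1 c (1 - y)) (at y)"
proof -
  have d1: "((\<lambda>y. F y / (c - ln (1 - y))) has_real_derivative U1 c y) (at y)"
    by (rule du) (use assms in auto)
  have d2': "((\<lambda>y. F y / (c - ln (1 - y))) has_real_derivative U1 c (1 - y)) (at (1 - y))"
    by (rule du) (use assms in auto)
  have d3: "((\<lambda>y. 1 - y) has_real_derivative -1) (at y)"
    by (auto intro!: derivative_eq_intros)
  have d2: "((\<lambda>y. F (1 - y) / (c - ln (1 - (1 - y)))) has_real_derivative U1 c (1 - y) * (-1)) (at y)"
    using DERIV_chain2[OF d2' d3] by simp
  have "((\<lambda>y. F y / (c - ln (1 - y)) + F (1 - y) / (c - ln (1 - (1 - y)))) has_real_derivative
      U1 c y + U1 c (1 - y) * (-1)) (at y)"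
    by (rule DERIV_add[OF d1 d2])
  then show ?thesis unfolding ff_def[abs_def] by simp
qed

lemma ff_mono: assumes "c > 0" "\<And>y. 0 < y \<Longrightarrow> y < 1 \<Longrightarrow> Qf c y \<le> 0" "0 < y1" "y1 \<le> y2" "y2 \<le> 1/2"
  shows "ff c y1 \<le> ff c y2"
proof (rule DERIV_nonneg_imp_nondecreasing[OF assms(4)])
  fix x assume x: "y1 \<le> x" "x \<le> y2"
  then have x0: "0 < x" "x \<le> 1/2" using assms by auto
  have "U1 c (1 - x) \<le> U1 c x" by (rule U1_anti[OF assms(1,2)]) (use x0 in auto)
  then show "\<exists>y. DERIV (ff c) x :> y \<and> y \<ge> 0" using dff[OF assms(1) x0(1)] x0 by force
qed

lemma ff_anti: assumes "c > 0" "\<And>y. 0 < y \<Longrightarrow> y < 1 \<Longrightarrow> Qf c y \<ge> 0" "0 < y1" "y1 \<le> y2" "y2 \<le> 1/2"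
  shows "ff c y2 \<le> ff c y1"
proof (rule DERIV_nonpos_imp_nonincreasing[OF assms(4)])
  fix x assume x: "y1 \<le> x" "x \<le> y2"
  then have x0: "0 < x" "x \<le> 1/2" using assms by auto
  have "U1 c x \<le> U1 c (1 - x)" by (rule U1_mono[OF assms(1,2)]) (use x0 in auto)
  then show "\<exists>y. DERIV (ff c) x :> y \<and> y \<le> 0" using dff[OF assms(1) x0(1)] x0 by force
qed

lemma isCont_F: "isCont F 0"
  using dF[of 0] by (intro DERIV_isCont) auto

lemma lim1: assumes "c > 0" shows "((\<lambda>y. F y / (c - ln (1 - y))) \<longlongrightarrow> 1 / c) (at_right 0)"
proof -
  have "isCont (\<lambda>y. F y / (c - ln (1 - y))) 0"
    using assms by (intro continuous_intros isCont_F) auto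
  then have "((\<lambda>y. F y / (c - ln (1 - y))) \<longlongrightarrow> F 0 / (c - ln (1 - 0))) (at 0)"
    by (simp add: isCont_def)
  moreover have "F 0 = 1" unfolding F_def by (simp add: A_def)
  ultimately have "((\<lambda>y. F y / (c - ln (1 - y))) \<longlongrightarrow> 1 / c) (at 0)" by simp
  then show ?thesis by (rule tendsto_mono[OF at_le[OF subset_UNIV]])
qed

lemma lim2: assumes "c > 0" shows "((\<lambda>y. F (1 - y) / (c - ln y)) \<longlongrightarrow> L) (at_right 0)"
proof (rule LIM_zero_cancel, rule Lim_null_comparison)
  have at: "LIM y at_right (0::real). c - ln y :> at_top"
  proof -
    have "LIM y at_right (0::real). - ln y :> at_top"
      by (rule filterlim_compose[OF filterlim_uminus_at_top_at_bot ln_at_0])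
    then have "LIM y at_right (0::real). c + (- ln y) :> at_top"
      by (rule filterlim_tendsto_add_at_top[OF tendsto_const])
    then show ?thesis by simp
  qed
  show "((\<lambda>y. (K1 + L * \<bar>c\<bar>) / (c - ln y)) \<longlongrightarrow> 0) (at_right 0)"
    by (rule tendsto_divide_0[OF tendsto_const filterlim_at_top_imp_at_infinity[OF at]])
  have "eventually (\<lambda>y. 0 < y \<and> y < 1) (at_right (0::real))"
    unfolding eventually_at_right_field by (intro exI[of _ 1]) auto
  then show "eventually (\<lambda>y. norm (F (1 - y) / (c - ln y) - L) \<le> (K1 + L * \<bar>c\<bar>) / (c - ln y)) (at_right 0)"
  proof (rule eventually_mono)
    fix y :: real assume y: "0 < y \<and> y < 1"
    have "ln y < 0" using y by simp
    then have T: "c - ln y > 0" using assms by linarith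
    have K: "\<bar>F (1 - y) - L * (- ln y)\<bar> \<le> K1" using K1_abs[of "1 - y"] y by simp
    have e: "F (1 - y) / (c - ln y) - L = (F (1 - y) - L * (- ln y) - L * c) / (c - ln y)"
      using T by (simp add: field_simps)
    have "\<bar>L * c\<bar> = L * \<bar>c\<bar>" using L_pos by (simp add: abs_mult)
    moreover have "\<bar>F (1 - y) - L * (- ln y) - L * c\<bar> \<le> \<bar>F (1 - y) - L * (- ln y)\<bar> + \<bar>L * c\<bar>"
      by (rule abs_triangle_ineq4)
    ultimately have N: "\<bar>F (1 - y) - L * (- ln y) - L * c\<bar> \<le> K1 + L * \<bar>c\<bar>" using K by linarith
    have "norm (F (1 - y) / (c - ln y) - L) = \<bar>F (1 - y) - L * (- ln y) - L * c\<bar> / (c - ln y)"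
      unfolding e real_norm_def abs_divide using T by simp
    also have "\<dots> \<le> (K1 + L * \<bar>c\<bar>) / (c - ln y)"
      using N T by (intro divide_right_mono) auto
    finally show "norm (F (1 - y) / (c - ln y) - L) \<le> (K1 + L * \<bar>c\<bar>) / (c - ln y)" .
  qed
qed

lemma ff_lim: assumes "c > 0" shows "(ff c \<longlongrightarrow> 1 / c + L) (at_right 0)"
  unfolding ff_def[abs_def] by (rule tendsto_add[OF lim1[OF assms] lim2[OF assms]])

lemma ff_half: "ff c (1/2) = 2 * F (1/2) / (c + ln 2)"
proof -
  have "ln (1/2 :: real) = - ln 2" by (simp add: ln_div)
  then show ?thesis unfolding ff_def by simp
qed

end



lemma gen4: fixes S :: real assumes "0 < S" "S \<le> 1" shows "S^4 / 16 \<le> S * (S + 1) / 32"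
proof -
  have "S^3 \<le> 1" using assms by (intro power_le_one) auto
  then have a1: "S^4 \<le> S" using mult_left_mono[of "S^3" 1 S] assms by (simp add: power_Suc[symmetric] del: power_Suc)
  have "S^2 \<le> 1" using assms by (intro power_le_one) auto
  then have a2: "S^4 \<le> S^2" using mult_left_mono[of "S^2" 1 "S^2"] by (simp add: power_add[symmetric] del: power_add)
  have "2 * S^4 \<le> S * (S + 1)" using a1 a2 by (simp add: power2_eq_square algebra_simps)
  then show ?thesis by simp
qed

context hyp begin

lemma ff_min: "x \<in> {0<..<1} \<Longrightarrow> ff c x = ff c (min x (1 - x)) \<and> 0 < min x (1 - x) \<and> min x (1 - x) \<le> 1/2"
  using ff_sym[of c x] by (auto simp: min_def)

lemma main_concave:
  assumes c: "c \<in> {delta_minus a b .. delta_plus a b}" and x: "x \<in> {0<..<1}"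
  shows "1 / c + L \<le> ff c x \<and> ff c x \<le> ff c (1/2)"
proof -
  have c0: "c > 0" using phi_minus_0 dm_le[of 0] c by auto
  have Q: "Qf c y \<le> 0" if "0 < y" "y < 1" for y
    using Qf_nonpos[of y c] dm_le[of y] dp_ge[of y] c that by auto
  define z where "z = min x (1 - x)"
  have z: "ff c x = ff c z" "0 < z" "z \<le> 1/2" using ff_min[OF x] unfolding z_def by auto
  have up: "ff c z \<le> ff c (1/2)" by (rule ff_mono[OF c0 Q]) (use z in auto)
  have ev: "eventually (\<lambda>y. ff c y \<le> ff c z) (at_right 0)"
    unfolding eventually_at_right_field
    by (intro exI[of _ z] conjI allI impI ff_mono[OF c0 Q]) (use z in auto)
  have lo: "1 / c + L \<le> ff c z"
    by (rule tendsto_upperbound[OF ff_lim[OF c0] ev]) simp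
  show ?thesis using up lo z by simp
qed

lemma phi_plus_0: "phi_plus a b 0 > 0"
proof -
  have F0: "F 0 = 1" unfolding F_def by (simp add: A_def)
  have G0: "G 0 = 1" unfolding G_def by (simp add: C_def)
  have H0: "H 0 = 1" unfolding H_def by (simp add: E_def)
  have ab4: "4 * (a * b) \<le> s^2" using sum_squares_ge_zero[of "a - b" 0]
    by (simp add: power2_eq_square algebra_simps)
  have k4: "k \<le> 1/4"
  proof -
    have "k = a * b / s" unfolding k_def by simp
    also have "\<dots> \<le> (s^2 / 4) / s" using ab4 s0 by (intro divide_right_mono) auto
    also have "\<dots> = s / 4"
    proof -
      have gen: "\<And>S::real. S \<noteq> 0 \<Longrightarrow> (S^2 / 4) / S = S / 4" by (simp add: power2_eq_square)
      show ?thesis using gen[of s] s0 by simp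
    qed
    also have "\<dots> \<le> 1/4" using ab1 by simp
    finally show ?thesis .
  qed
  have t1: "(a*b)^2 / (s*(s+1)) \<le> 1/32"
  proof -
    have "(a*b)^2 \<le> (s^2/4)^2" using ab4 a0 b0 by (intro power_mono) auto
    also have "\<dots> = s^4 / 16" by (simp add: power2_eq_square power4_eq_xxxx)
    finally have n: "(a*b)^2 \<le> s^4 / 16" .
    have "s^4 / 16 \<le> s * (s + 1) / 32" by (rule gen4) (use s0 ab1 in auto)
    then have "(a*b)^2 \<le> s * (s + 1) / 32" using n by linarith
    then show ?thesis using s0 by (simp add: divide_le_eq mult.commute)
  qed
  have hf0: "hfun a b 0 = (a*b)^2 / (s*(s+1)) + k" unfolding hfun_eq H0 G0 by simp
  have gf0: "gfun a b 0 = - (2 * k + 1)" unfolding gfun_eq G0 F0 by simp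
  have D0: "Deltafun a b 0 \<ge> 0"
  proof -
    have "Deltafun a b 0 = (2 * k + 1)^2 - 8 * ((a*b)^2 / (s*(s+1)) + k)"
      unfolding Deltafun_def hf0 gf0 F_eq F0 by (simp add: power2_eq_square algebra_simps)
    also have "\<dots> = (1 - 2 * k)^2 - 8 * ((a*b)^2 / (s*(s+1)))" by (simp add: power2_eq_square algebra_simps)
    also have "\<dots> \<ge> 1/4 - 8 * (1/32)"
    proof -
      have "(1 - 2 * k)^2 \<ge> (1/2)^2" using k4 k0 by (intro power_mono) auto
      then have "(1 - 2 * k)^2 \<ge> 1/4" by (simp add: power2_eq_square)
      then show ?thesis using t1 by linarith
    qed
    finally show ?thesis by simp
  qed
  have h0: "hfun a b 0 > 0" using h_pos[of 0] k0 by simp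
  have "(- gfun a b 0 - sqrt (Deltafun a b 0)) / (2 * hfun a b 0) > 0" using rminus_bounds(1)[of 0] by simp
  moreover have "(- gfun a b 0 - sqrt (Deltafun a b 0)) / (2 * hfun a b 0) \<le> (- gfun a b 0 + sqrt (Deltafun a b 0)) / (2 * hfun a b 0)"
    using D0 h0 by (intro divide_right_mono) auto
  ultimately show ?thesis unfolding phi_plus_def by simp
qed

lemma main_convex:
  assumes c: "c \<ge> alpha0 a b" and x: "x \<in> {0<..<1}"
  shows "1 / c + L \<ge> ff c x \<and> ff c x \<ge> ff c (1/2)"
proof -
  have c0: "c > 0" using phi_plus_0 a0_ge[of 0] c by auto
  have Q: "Qf c y \<ge> 0" if "0 < y" "y < 1" for y
    using Qf_nonneg[of y c] a0_ge[of y] c that by auto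
  define z where "z = min x (1 - x)"
  have z: "ff c x = ff c z" "0 < z" "z \<le> 1/2" using ff_min[OF x] unfolding z_def by auto
  have up: "ff c (1/2) \<le> ff c z" by (rule ff_anti[OF c0 Q]) (use z in auto)
  have ev: "eventually (\<lambda>y. ff c z \<le> ff c y) (at_right 0)"
    unfolding eventually_at_right_field
    by (intro exI[of _ z] conjI allI impI ff_anti[OF c0 Q]) (use z in auto)
  have lo: "ff c z \<le> 1 / c + L"
    by (rule tendsto_lowerbound[OF ff_lim[OF c0] ev]) simp
  show ?thesis using up lo z by simp
qed

end

theorem corollary2:
  fixes a b c :: real
  assumes "0 < a" "a \<le> 1" "0 < b" "b \<le> 1" "a + b \<le> 1"
  shows "(c \<in> {delta_minus a b .. delta_plus a b} \<longrightarrow>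
           (\<forall>x\<in>{0<..<1}.
              1/c + 1/Beta a b
                \<le> hyp2F1 a b (a+b) x / (c - ln (1-x)) + hyp2F1 a b (a+b) (1-x) / (c - ln x)
            \<and> hyp2F1 a b (a+b) x / (c - ln (1-x)) + hyp2F1 a b (a+b) (1-x) / (c - ln x)
                \<le> 2 * hyp2F1 a b (a+b) (1/2) / (c + ln 2)))
       \<and> (c \<ge> alpha0 a b \<longrightarrow>
           (\<forall>x\<in>{0<..<1}.
              1/c + 1/Beta a b
                \<ge> hyp2F1 a b (a+b) x / (c - ln (1-x)) + hyp2F1 a b (a+b) (1-x) / (c - ln x)
            \<and> hyp2F1 a b (a+b) x / (c - ln (1-x)) + hyp2F1 a b (a+b) (1-x) / (c - ln x)
                \<ge> 2 * hyp2F1 a b (a+b) (1/2) / (c + ln 2)))"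
proof -
  interpret hyp a b by unfold_locales (use assms in auto)
  have e: "hyp2F1 a b (a+b) x / (c - ln (1-x)) + hyp2F1 a b (a+b) (1-x) / (c - ln x) = ff c x" for x
    unfolding ff_def F_eq by simp
  have e2: "2 * hyp2F1 a b (a+b) (1/2) / (c + ln 2) = ff c (1/2)"
    unfolding ff_half F_eq by simp
  have e3: "1 / Beta a b = L" unfolding L_def by simp
  show ?thesis unfolding e e2 e3 using main_concave main_convex by blast
qed


end
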